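(* Let $\mathcal{X}\subseteq\mathbb{R}^N$, $\Theta\subseteq\mathbb{R}^K$, and let $p(\mathbf{x},\boldsymbol{\theta})$ be a joint p.d.f. on $\mathcal{X}\times\Theta$ with marginal $p(\mathbf{x})$, posterior $p(\boldsymbol{\theta}\mid\mathbf{x})$ and support $\mathcal{S}_{\mathcal{X}}=\{\mathbf{x}: p(\mathbf{x})>0\}$. Let $\mathbf{g}=(g_1,\dots,g_L)^{T}$ with each $g_\ell\in\mathcal{W}_2$, and let $\boldsymbol{\varphi}=(\varphi_1,\dots,\varphi_M)^{T}$ with each $\varphi_m\in\mathcal{W}_2$, the functions $\varphi_1,\dots,\varphi_M$ being linearly independent in $\mathcal{L}_2(p(\mathbf{x},\boldsymbol{\theta}))$. Let $\boldsymbol{\zeta}=(\zeta_1,\dots,\zeta_L)^{T}$ with each $\zeta_\ell\in\mathcal{W}_2$ satisfying, for a.e. $\mathbf{x}\in\mathcal{S}_{\mathcal{X}}$, $\mathrm{E}_{\boldsymbol{\theta}\mid\mathbf{x}}[\zeta_\ell(\mathbf{x},\boldsymbol{\theta})\,\boldsymbol{\varphi}(\mathbf{x},\boldsymbol{\theta})]=\mathbf{0}$. Assume that $\mathbf{Q}_{\boldsymbol{\varphi}\mid\mathbf{x}}$ is invertible for a.e. $\mathbf{x}\in\mathcal{S}_{\mathcal{X}}$. Then \[ \mathbf{Q}_{(\mathbf{g}-\boldsymbol{\zeta})}\succeq \mathrm{E}_{\mathbf{x}}\big[\mathbf{R}_{\mathbf{g}\boldsymbol{\varphi}\mid\mathbf{x}}\,\mathbf{Q}_{\boldsymbol{\varphi}\mid\mathbf{x}}^{-1}\,\mathbf{R}_{\mathbf{g}\boldsymbol{\varphi}\mid\mathbf{x}}^{T}\big]\succeq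 \mathbf{R}_{\mathbf{g}\boldsymbol{\varphi}}\,\mathbf{Q}_{\boldsymbol{\varphi}}^{-1}\,\mathbf{R}_{\mathbf{g}\boldsymbol{\varphi}}^{T}, \] where $\mathbf{A}\succeq\mathbf{B}$ means $\mathbf{A}-\mathbf{B}$ is positive semi-definite.
   Context: $\mathcal{L}_2(p(\mathbf{x},\boldsymbol{\theta}))$ is the space of real functions $\zeta(\mathbf{x},\boldsymbol{\theta})$ with $\mathrm{E}_{\mathbf{x},\boldsymbol{\theta}}[\zeta^2]<\infty$ (expectation w.r.t. the joint p.d.f.). $\mathcal{W}_2$ is the subspace of those $\zeta\in\mathcal{L}_2(p(\mathbf{x},\boldsymbol{\theta}))$ such that for a.e. $\mathbf{x}\in\mathcal{S}_{\mathcal{X}}$, $\mathrm{E}_{\boldsymbol{\theta}\mid\mathbf{x}}[\zeta(\mathbf{x},\boldsymbol{\theta})^2]<\infty$, where $\mathrm{E}_{\boldsymbol{\theta}\mid\mathbf{x}}$ denotes expectation w.r.t. $p(\boldsymbol{\theta}\mid\mathbf{x})$ and $\mathrm{E}_{\mathbf{x}}$ expectation w.r.t. $p(\mathbf{x})$. Define the matrices $\mathbf{Q}_{(\mathbf{g}-\boldsymbol{\zeta})}=\mathrm{E}_{\mathbf{x},\boldsymbol{\theta}}[(\mathbf{g}-\boldsymbol{\zeta})(\mathbf{g}-\boldsymbol{\zeta})^{T}]$ ($L\times L$), $\mathbf{R}_{\mathbf{g}\boldsymbol{\varphi}}=\mathrm{E}_{\mathbf{x},\boldsymbol{\theta}}[\mathbf{g}(\mathbf{x},\boldsymbol{\theta})\boldsymbol{\varphi}(\mathbf{x},\boldsymbol{\theta})^{T}]$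 ($L\times M$), $\mathbf{Q}_{\boldsymbol{\varphi}}=\mathrm{E}_{\mathbf{x},\boldsymbol{\theta}}[\boldsymbol{\varphi}\boldsymbol{\varphi}^{T}]$ ($M\times M$), and their posterior counterparts $\mathbf{R}_{\mathbf{g}\boldsymbol{\varphi}\mid\mathbf{x}}=\mathrm{E}_{\boldsymbol{\theta}\mid\mathbf{x}}[\mathbf{g}(\mathbf{x},\boldsymbol{\theta})\boldsymbol{\varphi}(\mathbf{x},\boldsymbol{\theta})^{T}]$ and $\mathbf{Q}_{\boldsymbol{\varphi}\mid\mathbf{x}}=\mathrm{E}_{\boldsymbol{\theta}\mid\mathbf{x}}[\boldsymbol{\varphi}(\mathbf{x},\boldsymbol{\theta})\boldsymbol{\varphi}(\mathbf{x},\boldsymbol{\theta})^{T}]$. *)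

theory Defs
  imports "HOL-Analysis.Analysis"
begin

definition marg :: "((real^'n) \<times> (real^'k) \<Rightarrow> real) \<Rightarrow> real^'n \<Rightarrow> real" where
  "marg p x = (\<integral>\<theta>. p (x, \<theta>) \<partial>lborel)"

definition support :: "((real^'n) \<times> (real^'k) \<Rightarrow> real) \<Rightarrow> (real^'n) set" where
  "support p = {x. marg p x > 0}"

definition joint_exp :: "((real^'n) \<times> (real^'k) \<Rightarrow> real) \<Rightarrow> ((real^'n) \<times> (real^'k) \<Rightarrow> real) \<Rightarrow> real" where
  "joint_exp p f = (\<integral>z. p z * f z \<partial>lborel)"

definition post_exp :: "((real^'n) \<times> (real^'k) \<Rightarrow> real) \<Rightarrow> real^'n \<Rightarrow> (real^'k \<Rightarrow> real) \<Rightarrow> real" where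
  "post_exp p x f = (\<integral>\<theta>. (p (x, \<theta>) / marg p x) * f \<theta> \<partial>lborel)"

definition marg_exp :: "((real^'n) \<times> (real^'k) \<Rightarrow> real) \<Rightarrow> (real^'n \<Rightarrow> real) \<Rightarrow> real" where
  "marg_exp p h = (\<integral>x. marg p x * h x \<partial>lborel)"

definition W2 :: "((real^'n) \<times> (real^'k) \<Rightarrow> real) \<Rightarrow> ((real^'n) \<times> (real^'k) \<Rightarrow> real) \<Rightarrow> bool" where
  "W2 p \<zeta> \<longleftrightarrow> \<zeta> \<in> borel_measurable lborel
     \<and> integrable lborel (\<lambda>z. p z * (\<zeta> z)\<^sup>2)
     \<and> (AE x in lborel. x \<in> support p \<longrightarrow>
          integrable lborel (\<lambda>\<theta>. (p (x, \<theta>) / marg p x) * (\<zeta> (x, \<theta>))\<^sup>2))"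

definition lin_indep_L2 :: "((real^'n) \<times> (real^'k) \<Rightarrow> real) \<Rightarrow> ((real^'n) \<times> (real^'k) \<Rightarrow> real^'m) \<Rightarrow> bool" where
  "lin_indep_L2 p \<phi> \<longleftrightarrow>
     (\<forall>c::real^'m. (AE z in lborel. p z \<noteq> 0 \<longrightarrow> c \<bullet> \<phi> z = 0) \<longrightarrow> c = 0)"

definition Rmat :: "((real^'n) \<times> (real^'k) \<Rightarrow> real) \<Rightarrow> ((real^'n) \<times> (real^'k) \<Rightarrow> real^'l)
     \<Rightarrow> ((real^'n) \<times> (real^'k) \<Rightarrow> real^'m) \<Rightarrow> real^'m^'l" where
  "Rmat p u v = (\<chi> i j. joint_exp p (\<lambda>z. u z $ i * v z $ j))"

definition Rmat_post :: "((real^'n) \<times> (real^'k) \<Rightarrow> real) \<Rightarrow> real^'n \<Rightarrow> ((real^'n) \<times> (real^'k) \<Rightarrow> real^'l)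
     \<Rightarrow> ((real^'n) \<times> (real^'k) \<Rightarrow> real^'m) \<Rightarrow> real^'m^'l" where
  "Rmat_post p x u v = (\<chi> i j. post_exp p x (\<lambda>\<theta>. u (x, \<theta>) $ i * v (x, \<theta>) $ j))"

definition mat_marg_exp :: "((real^'n) \<times> (real^'k) \<Rightarrow> real) \<Rightarrow> (real^'n \<Rightarrow> real^'b^'a) \<Rightarrow> real^'b^'a" where
  "mat_marg_exp p A = (\<chi> i j. marg_exp p (\<lambda>x. A x $ i $ j))"

definition psd :: "real^'a^'a \<Rightarrow> bool" where
  "psd A \<longleftrightarrow> (\<forall>v. 0 \<le> v \<bullet> (A *v v))"

definition loewner_ge :: "real^'a^'a \<Rightarrow> real^'a^'a \<Rightarrow> bool" (infix "\<succeq>\<^sub>L" 50) where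
  "A \<succeq>\<^sub>L B \<longleftrightarrow> psd (A - B)"

end

theory Submission
  imports Defs
begin


definition L2d :: "'a measure \<Rightarrow> ('a \<Rightarrow> real) \<Rightarrow> ('a \<Rightarrow> real) \<Rightarrow> bool" where
  "L2d N q f \<longleftrightarrow> f \<in> borel_measurable N \<and> integrable N (\<lambda>t. q t * (f t)\<^sup>2)"

lemma L2d_prod:
  assumes q: "q \<in> borel_measurable N" "\<And>t. 0 \<le> q t"
  and f: "L2d N q f" and h: "L2d N q h"
  shows "integrable N (\<lambda>t. q t * (f t * h t))"
proof (rule Bochner_Integration.integrable_bound)
  show "integrable N (\<lambda>t. q t * (f t)\<^sup>2 + q t * (h t)\<^sup>2)"
    using f h unfolding L2d_def by auto
  show "(\<lambda>t. q t * (f t * h t)) \<in> borel_measurable N"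
    using f h q unfolding L2d_def by auto
  show "AE t in N. norm (q t * (f t * h t)) \<le> norm (q t * (f t)\<^sup>2 + q t * (h t)\<^sup>2)"
  proof (rule AE_I2)
    fix t
    have a: "\<bar>f t * h t\<bar> \<le> (f t)\<^sup>2 + (h t)\<^sup>2"
    proof -
      have e: "(\<bar>f t\<bar> - \<bar>h t\<bar>)\<^sup>2 = (f t)\<^sup>2 + (h t)\<^sup>2 - 2*\<bar>f t * h t\<bar>"
        by (simp add: power2_eq_square abs_mult algebra_simps)
      have "0 \<le> (\<bar>f t\<bar> - \<bar>h t\<bar>)\<^sup>2" by simp
      then show ?thesis using e by simp
    qed
    have "\<bar>q t * (f t * h t)\<bar> = q t * \<bar>f t * h t\<bar>" using q(2)[of t] by (simp add: abs_mult)
    also have "\<dots> \<le> q t * ((f t)\<^sup>2 + (h t)\<^sup>2)" using q(2)[of t] a by (simp add: mult_left_mono)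
    finally show "norm (q t * (f t * h t)) \<le> norm (q t * (f t)\<^sup>2 + q t * (h t)\<^sup>2)"
      using q(2)[of t] by (simp add: algebra_simps)
  qed
qed

lemma L2d_zero: "L2d N q (\<lambda>t. 0)" by (simp add: L2d_def)

lemma L2d_add:
  assumes q: "q \<in> borel_measurable N" "\<And>t. 0 \<le> q t"
  and f: "L2d N q f" and h: "L2d N q h"
  shows "L2d N q (\<lambda>t. f t + h t)"
proof -
  have "integrable N (\<lambda>t. q t * (f t)\<^sup>2 + 2 * (q t * (f t * h t)) + q t * (h t)\<^sup>2)"
    using f h L2d_prod[OF q f h] unfolding L2d_def by auto
  moreover have "(\<lambda>t. q t * (f t)\<^sup>2 + 2 * (q t * (f t * h t)) + q t * (h t)\<^sup>2) = (\<lambda>t. q t * (f t + h t)\<^sup>2)"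
    by (auto simp: power2_eq_square algebra_simps)
  ultimately show ?thesis using f h unfolding L2d_def by auto
qed

lemma L2d_scale:
  assumes f: "L2d N q f"
  shows "L2d N q (\<lambda>t. c * f t)"
proof -
  have "integrable N (\<lambda>t. c\<^sup>2 * (q t * (f t)\<^sup>2))" using f unfolding L2d_def by auto
  moreover have "(\<lambda>t. c\<^sup>2 * (q t * (f t)\<^sup>2)) = (\<lambda>t. q t * (c * f t)\<^sup>2)"
    by (auto simp: power2_eq_square algebra_simps)
  ultimately show ?thesis using f unfolding L2d_def by auto
qed

lemma L2d_sum:
  assumes q: "q \<in> borel_measurable N" "\<And>t. 0 \<le> q t"
  and f: "\<And>i. i \<in> I \<Longrightarrow> L2d N q (f i)"
  shows "L2d N q (\<lambda>t. \<Sum>i\<in>I. f i t)"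
  using f
proof (induction I rule: infinite_finite_induct)
  case (infinite A) then show ?case by (simp add: L2d_zero)
next
  case empty then show ?case by (simp add: L2d_zero)
next
  case (insert x F)
  then show ?case using L2d_add[OF q, of "f x" "\<lambda>t. \<Sum>i\<in>F. f i t"] by simp
qed

lemma L2d_diff:
  assumes q: "q \<in> borel_measurable N" "\<And>t. 0 \<le> q t"
  and f: "L2d N q f" and h: "L2d N q h"
  shows "L2d N q (\<lambda>t. f t - h t)"
  using L2d_add[OF q f L2d_scale[OF h, of "-1"]] by simp

lemma L2d_inner:
  fixes F :: "'a \<Rightarrow> real^'m"
  assumes q: "q \<in> borel_measurable N" "\<And>t. 0 \<le> q t"
  and f: "\<And>i. L2d N q (\<lambda>t. F t $ i)"
  shows "L2d N q (\<lambda>t. c \<bullet> F t)"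
  unfolding inner_vec_def using L2d_sum[OF q, of UNIV "\<lambda>i t. c $ i * F t $ i"] L2d_scale[OF f]
  by simp

lemma bilin:
  fixes f :: "'a \<Rightarrow> real^'l" and h :: "'a \<Rightarrow> real^'m"
  assumes "\<And>i j. integrable N (\<lambda>t. q t * (f t $ i * h t $ j))"
  shows "v \<bullet> ((\<chi> i j. \<integral>t. q t * (f t $ i * h t $ j) \<partial>N) *v w) = (\<integral>t. q t * ((v \<bullet> f t) * (w \<bullet> h t)) \<partial>N)"
proof -
  have "v \<bullet> ((\<chi> i j. \<integral>t. q t * (f t $ i * h t $ j) \<partial>N) *v w) =
     (\<Sum>i\<in>UNIV. \<Sum>j\<in>UNIV. v $ i * w $ j * (\<integral>t. q t * (f t $ i * h t $ j) \<partial>N))"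
    by (simp add: inner_vec_def matrix_vector_mult_def sum_distrib_left ac_simps)
  also have "\<dots> = (\<Sum>i\<in>UNIV. \<Sum>j\<in>UNIV. \<integral>t. v $ i * w $ j * (q t * (f t $ i * h t $ j)) \<partial>N)"
    by (simp only: integral_mult_right_zero)
  also have "\<dots> = (\<integral>t. (\<Sum>i\<in>UNIV. \<Sum>j\<in>UNIV. v $ i * w $ j * (q t * (f t $ i * h t $ j))) \<partial>N)"
    using assms by (simp add: Bochner_Integration.integral_sum)
  also have "\<dots> = (\<integral>t. q t * ((v \<bullet> f t) * (w \<bullet> h t)) \<partial>N)"
    apply (rule Bochner_Integration.integral_cong[OF refl])
    apply (simp add: inner_vec_def sum_distrib_left sum_distrib_right mult.assoc mult.left_commute)
    apply (subst sum.swap)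
    apply (simp add: mult.left_commute)
    done
  finally show ?thesis .
qed



lemma matrix_inv_props:
  fixes Q :: "real^'m^'m"
  assumes "invertible Q"
  shows "Q ** matrix_inv Q = mat 1" "matrix_inv Q ** Q = mat 1"
proof -
  have "\<exists>A'. Q ** A' = mat 1 \<and> A' ** Q = mat 1" using assms unfolding invertible_def by blast
  from someI_ex[OF this] show "Q ** matrix_inv Q = mat 1" "matrix_inv Q ** Q = mat 1"
    unfolding matrix_inv_def by auto
qed

lemma inner_mat_sym:
  fixes Q :: "real^'m^'m"
  assumes "transpose Q = Q"
  shows "a \<bullet> (Q *v b) = b \<bullet> (Q *v a)"
proof -
  have "a \<bullet> (Q *v b) = (a v* Q) \<bullet> b" by (simp add: dot_lmul_matrix)
  also have "a v* Q = transpose Q *v a" by simp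
  finally show ?thesis using assms by (simp add: inner_commute)
qed

lemma schur_alg:
  fixes Q :: "real^'m^'m" and R :: "real^'m^'l"
  assumes Qs: "transpose Q = Q" and Qpsd: "\<And>c. 0 \<le> c \<bullet> (Q *v c)" and Qi: "invertible Q"
  defines "M \<equiv> R ** matrix_inv Q ** transpose R"
  shows "v \<bullet> (M *v v) \<ge> 2 * (v \<bullet> (R *v w)) - w \<bullet> (Q *v w)"
    and "(\<forall>w. 0 \<le> s - 2 * (v \<bullet> (R *v w)) + w \<bullet> (Q *v w)) \<Longrightarrow> v \<bullet> (M *v v) \<le> s"
    and "a \<bullet> (M *v b) = b \<bullet> (M *v a)"
proof -
  note I = matrix_inv_props[OF Qi]
  define u where "u = transpose R *v v"
  define y where "y = matrix_inv Q *v u"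
  have uy: "u = Q *v y" unfolding y_def by (simp add: matrix_vector_mul_assoc I)
  have Mv: "v \<bullet> (M *v v) = y \<bullet> (Q *v y)"
  proof -
    have "v \<bullet> (M *v v) = v \<bullet> (R *v y)"
      unfolding M_def y_def u_def by (simp add: matrix_vector_mul_assoc[symmetric])
    also have "\<dots> = u \<bullet> y" unfolding u_def by (simp add: dot_lmul_matrix[symmetric])
    also have "\<dots> = y \<bullet> (Q *v y)" by (simp add: uy inner_commute)
    finally show ?thesis .
  qed
  have Rw: "v \<bullet> (R *v w) = y \<bullet> (Q *v w)" for w
  proof -
    have "v \<bullet> (R *v w) = u \<bullet> w" unfolding u_def by (simp add: dot_lmul_matrix[symmetric])
    also have "\<dots> = w \<bullet> (Q *v y)" by (simp add: uy inner_commute)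
    also have "\<dots> = y \<bullet> (Q *v w)" by (rule inner_mat_sym[OF Qs])
    finally show ?thesis .
  qed
  have expand: "(y - w) \<bullet> (Q *v (y - w)) = y \<bullet> (Q *v y) - 2 * (y \<bullet> (Q *v w)) + w \<bullet> (Q *v w)" for w
    using inner_mat_sym[OF Qs, of w y]
    by (simp add: matrix_vector_mult_diff_distrib inner_diff_left inner_diff_right)
  show "v \<bullet> (M *v v) \<ge> 2 * (v \<bullet> (R *v w)) - w \<bullet> (Q *v w)"
    using Qpsd[of "y - w"] expand[of w] Mv Rw[of w] by linarith
  show "v \<bullet> (M *v v) \<le> s" if "\<forall>w. 0 \<le> s - 2 * (v \<bullet> (R *v w)) + w \<bullet> (Q *v w)"
    using that[rule_format, of y] Mv Rw[of y] by linarith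
  show "a \<bullet> (M *v b) = b \<bullet> (M *v a)"
  proof -
    have gen: "a \<bullet> (M *v b) = (transpose R *v a) \<bullet> (matrix_inv Q *v (transpose R *v b))" for a b
      unfolding M_def by (simp add: matrix_vector_mul_assoc[symmetric] dot_lmul_matrix[symmetric])
    have sym: "c \<bullet> (matrix_inv Q *v d) = d \<bullet> (matrix_inv Q *v c)" for c d
    proof -
      define c' where "c' = matrix_inv Q *v c"
      define d' where "d' = matrix_inv Q *v d"
      have c: "c = Q *v c'" "d = Q *v d'" unfolding c'_def d'_def by (simp_all add: matrix_vector_mul_assoc I)
      have "c \<bullet> (matrix_inv Q *v d) = (Q *v c') \<bullet> d'" using c d'_def by simp
      also have "\<dots> = c' \<bullet> (Q *v d')" using inner_mat_sym[OF Qs, of c' d'] by (simp add: inner_commute)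
      also have "\<dots> = d \<bullet> (matrix_inv Q *v c)" using c c'_def by (simp add: inner_commute)
      finally show ?thesis .
    qed
    show ?thesis using gen[of a b] gen[of b a] sym by simp
  qed
qed



lemma matrix_inv_sing:
  fixes A :: "real^'m^'m"
  assumes "det A = 0"
  shows "matrix_inv A = matrix_inv (0::real^'m^'m)"
proof -
  have z: "(0::real^'m^'m) = mat 0" by (simp add: vec_eq_iff mat_def)
  have d0: "det (0::real^'m^'m) = 0" unfolding z by (rule det_0)
  have i0: "\<not> invertible (0::real^'m^'m)" using d0 by (simp only: invertible_det_nz)
  have iA: "\<not> invertible A" using assms by (simp add: invertible_det_nz)
  have e1: "(\<lambda>A'. A ** A' = mat 1 \<and> A' ** A = mat 1) = (\<lambda>_. False)"
    using iA unfolding invertible_def by (intro ext) blast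
  have e2: "(\<lambda>A'. (0::real^'m^'m) ** A' = mat 1 \<and> A' ** 0 = mat 1) = (\<lambda>_. False)"
    using i0 unfolding invertible_def by (intro ext) blast
  have "matrix_inv A = (SOME A'. False)" unfolding matrix_inv_def e1 ..
  moreover have "matrix_inv (0::real^'m^'m) = (SOME A'. False)" unfolding matrix_inv_def e2 ..
  ultimately show ?thesis by simp
qed

lemma matrix_inv_entry:
  fixes A :: "real^'m^'m"
  shows "matrix_inv A $ k $ l = (if det A = 0 then matrix_inv (0::real^'m^'m) $ k $ l
     else det (\<chi> a b. if b = k then axis l 1 $ a else A $ a $ b) / det A)"
proof (cases "det A = 0")
  case True then show ?thesis using matrix_inv_sing[OF True] by simp
next
  case False
  then have inv: "invertible A" by (simp add: invertible_det_nz)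
  have "A *v (matrix_inv A *v axis l 1) = axis l 1"
    by (simp only: matrix_vector_mul_assoc matrix_inv_props(1)[OF inv] matrix_vector_mul_lid)
  then have "matrix_inv A *v axis l 1 = (\<chi> k. det (\<chi> a b. if b = k then axis l 1 $ a else A $ a $ b) / det A)"
    by (rule iffD1[OF cramer[OF False]])
  moreover have "(matrix_inv A *v axis l 1) $ k = matrix_inv A $ k $ l"
    unfolding matrix_vector_mult_basis column_def by simp
  ultimately show ?thesis using False by simp
qed

lemma det_measurable:
  fixes A :: "'b \<Rightarrow> real^'m^'m"
  assumes "\<And>i j. (\<lambda>x. A x $ i $ j) \<in> borel_measurable M"
  shows "(\<lambda>x. det (A x)) \<in> borel_measurable M"
  unfolding det_def
  apply (rule borel_measurable_sum)
  apply (rule borel_measurable_times)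
   apply (rule borel_measurable_const)
  apply (rule borel_measurable_prod)
  apply (rule assms)
  done

lemma matrix_inv_measurable:
  fixes A :: "'b \<Rightarrow> real^'m^'m"
  assumes am: "\<And>i j. (\<lambda>x. A x $ i $ j) \<in> borel_measurable M"
  shows "(\<lambda>x. matrix_inv (A x) $ k $ l) \<in> borel_measurable M"
proof -
  have d: "(\<lambda>x. det (A x)) \<in> borel_measurable M" by (rule det_measurable) (rule am)
  have e: "(\<lambda>x. det (\<chi> a b. if b = k then axis l 1 $ a else A x $ a $ b)) \<in> borel_measurable M"
  proof (rule det_measurable)
    fix i j
    show "(\<lambda>x. (\<chi> a b. if b = k then axis l 1 $ a else A x $ a $ b) $ i $ j) \<in> borel_measurable M"
    proof (cases "j = k")
      case True then show ?thesis by simp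
    next
      case False then show ?thesis using am by simp
    qed
  qed
  have s: "{x \<in> space M. det (A x) = 0} \<in> sets M"
  proof -
    have "{x \<in> space M. det (A x) = 0} = (\<lambda>x. det (A x)) -` {0} \<inter> space M" by auto
    moreover have "(\<lambda>x. det (A x)) -` {0} \<inter> space M \<in> sets M"
      by (rule measurable_sets[OF d]) simp
    ultimately show ?thesis by simp
  qed
  have eq: "(\<lambda>x. matrix_inv (A x) $ k $ l) = (\<lambda>x. if det (A x) = 0 then matrix_inv (0::real^'m^'m) $ k $ l
     else det (\<chi> a b. if b = k then axis l 1 $ a else A x $ a $ b) / det (A x))"
    by (rule ext) (rule matrix_inv_entry)
  show ?thesis unfolding eq
    by (rule measurable_If[OF borel_measurable_const borel_measurable_divide[OF e d] s])
qed

lemma matmul_entry_measurable: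
  fixes A :: "'b \<Rightarrow> real^'m^'l" and B :: "'b \<Rightarrow> real^'k^'m"
  assumes "\<And>i j. (\<lambda>x. A x $ i $ j) \<in> borel_measurable M"
     "\<And>i j. (\<lambda>x. B x $ i $ j) \<in> borel_measurable M"
  shows "(\<lambda>x. (A x ** B x) $ i $ j) \<in> borel_measurable M"
  unfolding matrix_matrix_mult_def vec_lambda_beta
  apply (rule borel_measurable_sum)
  apply (rule borel_measurable_times)
   apply (rule assms)
  apply (rule assms)
  done

lemma transpose_entry_measurable:
  fixes A :: "'b \<Rightarrow> real^'m^'l"
  assumes "\<And>i j. (\<lambda>x. A x $ i $ j) \<in> borel_measurable M"
  shows "(\<lambda>x. transpose (A x) $ i $ j) \<in> borel_measurable M"
  unfolding transpose_def vec_lambda_beta by (rule assms)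



locale pdens =
  fixes p :: "(real^'n) \<times> (real^'k) \<Rightarrow> real"
  assumes p_meas: "p \<in> borel_measurable lborel"
    and p_nonneg: "\<And>z. 0 \<le> p z"
    and p_int: "integrable lborel p"
begin

lemma pm: "p \<in> borel_measurable (lborel \<Otimes>\<^sub>M lborel)"
  using p_meas by (simp add: lborel_prod)

lemma p_int2: "integrable (lborel \<Otimes>\<^sub>M lborel) p"
  using p_int by (simp add: lborel_prod)

lemma marg_meas: "marg p \<in> borel_measurable lborel"
proof -
  have "(\<lambda>x. \<integral>\<theta>. p (x, \<theta>) \<partial>lborel) \<in> borel_measurable lborel"
    by (rule lborel.borel_measurable_lebesgue_integral) (simp add: pm)
  then show ?thesis unfolding marg_def[abs_def] .
qed

lemma marg_nonneg: "0 \<le> marg p x"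
  unfolding marg_def by (rule integral_nonneg_AE) (simp add: p_nonneg)

lemma meas_pair:
  assumes "h \<in> borel_measurable (lborel::((real^'n) \<times> (real^'k)) measure)"
  shows "h \<in> borel_measurable (lborel \<Otimes>\<^sub>M lborel)"
  using assms by (simp add: lborel_prod)

lemma meas_sec:
  assumes "h \<in> borel_measurable (lborel::((real^'n) \<times> (real^'k)) measure)"
  shows "(\<lambda>\<theta>. h (x, \<theta>)) \<in> borel_measurable lborel"
  by (rule measurable_Pair2[OF meas_pair[OF assms]]) simp

lemma q_meas: "(\<lambda>\<theta>. p (x, \<theta>) / marg p x) \<in> borel_measurable lborel"
  by (rule borel_measurable_divide[OF meas_sec[OF p_meas] borel_measurable_const])

lemma q_nonneg: "0 \<le> p (x, \<theta>) / marg p x"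
  using p_nonneg marg_nonneg by simp

lemma postm:
  assumes hm: "h \<in> borel_measurable lborel"
  shows "(\<lambda>x. post_exp p x (\<lambda>\<theta>. h (x, \<theta>))) \<in> borel_measurable lborel"
proof -
  have a: "(\<lambda>z. p z / marg p (fst z) * h z) \<in> borel_measurable (lborel \<Otimes>\<^sub>M lborel)"
    by (rule borel_measurable_times[OF borel_measurable_divide[OF pm
          measurable_compose[OF measurable_fst marg_meas]] meas_pair[OF hm]])
  have "case_prod (\<lambda>x \<theta>. p (x, \<theta>) / marg p x * h (x, \<theta>)) = (\<lambda>z. p z / marg p (fst z) * h z)"
    by auto
  with a have "(\<lambda>x. \<integral>\<theta>. p (x, \<theta>) / marg p x * h (x, \<theta>) \<partial>lborel) \<in> borel_measurable lborel"
    by (intro lborel.borel_measurable_lebesgue_integral) simp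
  then show ?thesis unfolding post_exp_def .
qed

lemma fubini_post:
  assumes hm: "h \<in> borel_measurable lborel" and hi: "integrable lborel (\<lambda>z. p z * h z)"
  shows "integrable lborel (\<lambda>x. marg p x * post_exp p x (\<lambda>\<theta>. h (x, \<theta>)))"
    and "joint_exp p h = marg_exp p (\<lambda>x. post_exp p x (\<lambda>\<theta>. h (x, \<theta>)))"
proof -
  have i2: "integrable (lborel \<Otimes>\<^sub>M lborel) (\<lambda>z. p z * h z)" using hi by (simp add: lborel_prod)
  have AE1: "AE x in lborel. integrable lborel (\<lambda>\<theta>. p (x, \<theta>))"
    using lborel_pair.AE_integrable_fst'[OF p_int2] by simp
  have key: "AE x in lborel. (\<integral>\<theta>. p (x, \<theta>) * h (x, \<theta>) \<partial>lborel) = marg p x * post_exp p x (\<lambda>\<theta>. h (x, \<theta>))"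
    using AE1
  proof eventually_elim
    fix x assume int: "integrable lborel (\<lambda>\<theta>. p (x, \<theta>))"
    show "(\<integral>\<theta>. p (x, \<theta>) * h (x, \<theta>) \<partial>lborel) = marg p x * post_exp p x (\<lambda>\<theta>. h (x, \<theta>))"
    proof (cases "marg p x = 0")
      case True
      then have "AE \<theta> in lborel. p (x, \<theta>) = 0"
        using integral_nonneg_eq_0_iff_AE[OF int] p_nonneg unfolding marg_def by simp
      then have "AE \<theta> in lborel. p (x, \<theta>) * h (x, \<theta>) = 0" by eventually_elim simp
      then have "(\<integral>\<theta>. p (x, \<theta>) * h (x, \<theta>) \<partial>lborel) = 0" by (rule integral_eq_zero_AE)
      then show ?thesis using True by simp
    next
      case False
      have "post_exp p x (\<lambda>\<theta>. h (x, \<theta>)) = (\<integral>\<theta>. (p (x, \<theta>) * h (x, \<theta>)) / marg p x \<partial>lborel)"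
        unfolding post_exp_def by (simp add: field_simps)
      also have "\<dots> = (\<integral>\<theta>. p (x, \<theta>) * h (x, \<theta>) \<partial>lborel) / marg p x"
        by (rule integral_divide_zero)
      finally show ?thesis using False by simp
    qed
  qed
  have m1: "(\<lambda>x. marg p x * post_exp p x (\<lambda>\<theta>. h (x, \<theta>))) \<in> borel_measurable lborel"
    by (rule borel_measurable_times[OF marg_meas postm[OF hm]])
  show "integrable lborel (\<lambda>x. marg p x * post_exp p x (\<lambda>\<theta>. h (x, \<theta>)))"
    by (rule integrable_cong_AE_imp[OF lborel_pair.integrable_fst'[OF i2] m1]) (use key in simp)
  have m2: "(\<lambda>x. \<integral>\<theta>. p (x, \<theta>) * h (x, \<theta>) \<partial>lborel) \<in> borel_measurable lborel"
    using lborel_pair.integrable_fst'[OF i2] by (simp add: borel_measurable_integrable)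
  have "joint_exp p h = (\<integral>z. p z * h z \<partial>(lborel \<Otimes>\<^sub>M lborel))"
    unfolding joint_exp_def by (simp add: lborel_prod)
  also have "\<dots> = (\<integral>x. (\<integral>\<theta>. p (x, \<theta>) * h (x, \<theta>) \<partial>lborel) \<partial>lborel)"
    using lborel_pair.integral_fst'[OF i2] by simp
  also have "\<dots> = (\<integral>x. marg p x * post_exp p x (\<lambda>\<theta>. h (x, \<theta>)) \<partial>lborel)"
    by (rule integral_cong_AE[OF m2 m1 key])
  finally show "joint_exp p h = marg_exp p (\<lambda>x. post_exp p x (\<lambda>\<theta>. h (x, \<theta>)))"
    unfolding marg_exp_def .
qed

lemma post_L2d:
  assumes "W2 p f"
  shows "AE x in lborel. x \<in> support p \<longrightarrow> L2d lborel (\<lambda>\<theta>. p (x, \<theta>) / marg p x) (\<lambda>\<theta>. f (x, \<theta>))"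
proof -
  have fm: "f \<in> borel_measurable lborel" using assms unfolding W2_def by blast
  show ?thesis using assms unfolding W2_def L2d_def
    by (auto intro: meas_sec[OF fm])
qed

lemma joint_L2d:
  assumes "W2 p f"
  shows "L2d lborel p f"
  using assms unfolding W2_def L2d_def by auto

end


lemma gen_forms:
  fixes f :: "'a \<Rightarrow> real^'l" and h :: "'a \<Rightarrow> real^'m"
  assumes q: "q \<in> borel_measurable N" "\<And>t. 0 \<le> q t"
  and f: "\<And>i. L2d N q (\<lambda>t. f t $ i)" and h: "\<And>j. L2d N q (\<lambda>t. h t $ j)"
  shows "v \<bullet> ((\<chi> i j. \<integral>t. q t * (f t $ i * h t $ j) \<partial>N) *v w) = (\<integral>t. q t * ((v \<bullet> f t) * (w \<bullet> h t)) \<partial>N)"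
    and "integrable N (\<lambda>t. q t * ((v \<bullet> f t) * (w \<bullet> h t)))"
    and "(\<lambda>t. (v \<bullet> f t) * (w \<bullet> h t)) \<in> borel_measurable N"
proof -
  show "v \<bullet> ((\<chi> i j. \<integral>t. q t * (f t $ i * h t $ j) \<partial>N) *v w) = (\<integral>t. q t * ((v \<bullet> f t) * (w \<bullet> h t)) \<partial>N)"
    by (rule bilin) (rule L2d_prod[OF q f h])
  have a: "L2d N q (\<lambda>t. v \<bullet> f t)" by (rule L2d_inner[OF q f])
  have b: "L2d N q (\<lambda>t. w \<bullet> h t)" by (rule L2d_inner[OF q h])
  show "integrable N (\<lambda>t. q t * ((v \<bullet> f t) * (w \<bullet> h t)))" by (rule L2d_prod[OF q a b])
  show "(\<lambda>t. (v \<bullet> f t) * (w \<bullet> h t)) \<in> borel_measurable N"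
    using a b unfolding L2d_def by auto
qed

lemma quad_gen:
  fixes F :: "'a \<Rightarrow> real^'l" and \<phi> :: "'a \<Rightarrow> real^'m"
  assumes q: "q \<in> borel_measurable N" "\<And>t. 0 \<le> q t"
  and F: "\<And>i. L2d N q (\<lambda>t. F t $ i)" and \<phi>: "\<And>j. L2d N q (\<lambda>t. \<phi> t $ j)"
  shows "0 \<le> v \<bullet> ((\<chi> i j. \<integral>t. q t * (F t $ i * F t $ j) \<partial>N) *v v)
     - 2 * (v \<bullet> ((\<chi> i j. \<integral>t. q t * (F t $ i * \<phi> t $ j) \<partial>N) *v w))
     + w \<bullet> ((\<chi> i j. \<integral>t. q t * (\<phi> t $ i * \<phi> t $ j) \<partial>N) *v w)"
proof -
  note e1 = gen_forms[OF q F F, of v v] and e2 = gen_forms[OF q F \<phi>, of v w]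
    and e3 = gen_forms[OF q \<phi> \<phi>, of w w]
  have "(\<integral>t. q t * ((v \<bullet> F t) * (v \<bullet> F t)) \<partial>N) - 2 * (\<integral>t. q t * ((v \<bullet> F t) * (w \<bullet> \<phi> t)) \<partial>N)
      + (\<integral>t. q t * ((w \<bullet> \<phi> t) * (w \<bullet> \<phi> t)) \<partial>N)
     = (\<integral>t. q t * ((v \<bullet> F t) * (v \<bullet> F t)) - 2 * (q t * ((v \<bullet> F t) * (w \<bullet> \<phi> t)))
      + q t * ((w \<bullet> \<phi> t) * (w \<bullet> \<phi> t)) \<partial>N)"
    using e1(2) e2(2) e3(2) by simp
  also have "\<dots> = (\<integral>t. q t * ((v \<bullet> F t) - (w \<bullet> \<phi> t))\<^sup>2 \<partial>N)"
    by (rule Bochner_Integration.integral_cong[OF refl]) (simp add: power2_eq_square algebra_simps)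
  also have "\<dots> \<ge> 0" by (rule integral_nonneg_AE) (simp add: q(2))
  finally show ?thesis using e1(1) e2(1) e3(1) by simp
qed

lemma axis_entry:
  fixes M :: "real^'m^'m"
  shows "axis i 1 \<bullet> (M *v axis j 1) = M $ i $ j"
  by (simp add: matrix_vector_mult_basis column_def inner_axis')

lemma psd_entry_bound:
  fixes M S :: "real^'m^'m"
  assumes pos: "\<And>c. 0 \<le> c \<bullet> (M *v c)" and sym: "\<And>a b. a \<bullet> (M *v b) = b \<bullet> (M *v a)"
    and le: "\<And>c. c \<bullet> (M *v c) \<le> c \<bullet> (S *v c)"
  shows "\<bar>M $ i $ j\<bar> \<le> (S $ i $ i + S $ j $ j) / 2"
proof -
  define a :: "real^'m" where "a = axis i 1"
  define b :: "real^'m" where "b = axis j 1"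
  have p1: "(a + b) \<bullet> (M *v (a + b)) = a \<bullet> (M *v a) + 2 * (a \<bullet> (M *v b)) + b \<bullet> (M *v b)"
    using sym[of b a] by (simp add: matrix_vector_right_distrib inner_add_left inner_add_right)
  have p2: "(a - b) \<bullet> (M *v (a - b)) = a \<bullet> (M *v a) - 2 * (a \<bullet> (M *v b)) + b \<bullet> (M *v b)"
    using sym[of b a] by (simp add: matrix_vector_mult_diff_distrib inner_diff_left inner_diff_right)
  have "\<bar>a \<bullet> (M *v b)\<bar> \<le> (a \<bullet> (M *v a) + b \<bullet> (M *v b)) / 2"
  proof -
    have ar: "\<And>X Y Z P1 P2::real. 0 \<le> P1 \<Longrightarrow> 0 \<le> P2 \<Longrightarrow> P1 = X + 2*Y + Z \<Longrightarrow> P2 = X - 2*Y + Z \<Longrightarrow> \<bar>Y\<bar> \<le> (X+Z)/2"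
      by (simp add: abs_le_iff)
    show ?thesis by (rule ar[OF pos[of "a + b"] pos[of "a - b"] p1 p2])
  qed
  also have "\<dots> \<le> (a \<bullet> (S *v a) + b \<bullet> (S *v b)) / 2" using add_mono[OF le[of a] le[of b]] by (simp add: divide_right_mono)
  finally show ?thesis unfolding a_def b_def axis_entry .
qed

lemma local_pack:
  fixes f z :: "'a \<Rightarrow> real^'l" and \<phi> :: "'a \<Rightarrow> real^'m"
  assumes q: "q \<in> borel_measurable N" "\<And>t. 0 \<le> q t"
  and Lf: "\<And>i. L2d N q (\<lambda>t. f t $ i)" and Lz: "\<And>i. L2d N q (\<lambda>t. z t $ i)"
  and L\<phi>: "\<And>j. L2d N q (\<lambda>t. \<phi> t $ j)"
  and orth: "\<And>i j. (\<integral>t. q t * (z t $ i * \<phi> t $ j) \<partial>N) = 0"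
  and inv: "invertible (\<chi> i j. \<integral>t. q t * (\<phi> t $ i * \<phi> t $ j) \<partial>N)"
  assumes R_def: "R = (\<chi> i j. \<integral>t. q t * (f t $ i * \<phi> t $ j) \<partial>N)"
    and Q_def: "Q = (\<chi> i j. \<integral>t. q t * (\<phi> t $ i * \<phi> t $ j) \<partial>N)"
    and S_def: "S = (\<chi> i j. \<integral>t. q t * (f t $ i * f t $ j) \<partial>N)"
    and Sz_def: "Sz = (\<chi> i j. \<integral>t. q t * ((f t - z t) $ i * (f t - z t) $ j) \<partial>N)"
    and M_def: "M = R ** matrix_inv Q ** transpose R"
  shows "v \<bullet> (M *v v) \<le> v \<bullet> (Sz *v v)"
    and "v \<bullet> (M *v v) \<le> v \<bullet> (S *v v)"
    and "2 * (v \<bullet> (R *v w)) - w \<bullet> (Q *v w) \<le> v \<bullet> (M *v v)"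
    and "a \<bullet> (M *v b) = b \<bullet> (M *v a)"
    and "transpose Q = Q"
    and "0 \<le> c \<bullet> (Q *v c)"
proof -
  have Qs: "transpose Q = Q"
    unfolding Q_def by (simp add: transpose_def vec_eq_iff mult.commute)
  have Qpsd: "0 \<le> c \<bullet> (Q *v c)" for c
    using quad_gen[OF q Lf L\<phi>, of 0 c] unfolding Q_def by simp
  have Qi: "invertible Q" using inv unfolding Q_def .
  have Lfz: "L2d N q (\<lambda>t. (f t - z t) $ i)" for i
    using L2d_diff[OF q Lf Lz, of i i] by simp
  have Rz: "(\<chi> i j. \<integral>t. q t * ((f t $ i - z t $ i) * \<phi> t $ j) \<partial>N) = R"
  proof -
    have "(\<integral>t. q t * ((f t $ i - z t $ i) * \<phi> t $ j) \<partial>N) = (\<integral>t. q t * (f t $ i * \<phi> t $ j) \<partial>N)" for i j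
    proof -
      have "(\<integral>t. q t * ((f t $ i - z t $ i) * \<phi> t $ j) \<partial>N)
          = (\<integral>t. q t * (f t $ i * \<phi> t $ j) - q t * (z t $ i * \<phi> t $ j) \<partial>N)"
        by (rule Bochner_Integration.integral_cong[OF refl]) (simp add: algebra_simps)
      also have "\<dots> = (\<integral>t. q t * (f t $ i * \<phi> t $ j) \<partial>N) - (\<integral>t. q t * (z t $ i * \<phi> t $ j) \<partial>N)"
        by (rule Bochner_Integration.integral_diff[OF L2d_prod[OF q Lf L\<phi>] L2d_prod[OF q Lz L\<phi>]])
      finally show ?thesis using orth[of i j] by simp
    qed
    then show ?thesis unfolding R_def by simp
  qed
  note sa = schur_alg[OF Qs Qpsd Qi, where R=R, folded M_def]
  show "v \<bullet> (M *v v) \<le> v \<bullet> (Sz *v v)"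
    by (rule sa(2)) (use quad_gen[OF q Lfz L\<phi>, of v] in \<open>simp add: Rz Sz_def Q_def\<close>)
  show "v \<bullet> (M *v v) \<le> v \<bullet> (S *v v)"
    by (rule sa(2)) (use quad_gen[OF q Lf L\<phi>, of v] in \<open>simp add: R_def S_def Q_def\<close>)
  show "2 * (v \<bullet> (R *v w)) - w \<bullet> (Q *v w) \<le> v \<bullet> (M *v v)" by (rule sa(1))
  show "a \<bullet> (M *v b) = b \<bullet> (M *v a)" by (rule sa(3))
  show "transpose Q = Q" by (rule Qs)
  show "0 \<le> c \<bullet> (Q *v c)" by (rule Qpsd)
qed

lemma bilin2:
  fixes F :: "'a \<Rightarrow> real^'l^'l"
  assumes "\<And>i j. integrable N (\<lambda>t. q t * F t $ i $ j)"
  shows "v \<bullet> ((\<chi> i j. \<integral>t. q t * F t $ i $ j \<partial>N) *v w) = (\<integral>t. q t * (v \<bullet> (F t *v w)) \<partial>N)"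
    and "integrable N (\<lambda>t. q t * (v \<bullet> (F t *v w)))"
proof -
  have eq: "(\<lambda>t. q t * (v \<bullet> (F t *v w))) = (\<lambda>t. \<Sum>i\<in>UNIV. \<Sum>j\<in>UNIV. v $ i * w $ j * (q t * F t $ i $ j))"
    by (rule ext) (simp add: inner_vec_def matrix_vector_mult_def sum_distrib_left ac_simps)
  show "integrable N (\<lambda>t. q t * (v \<bullet> (F t *v w)))"
    unfolding eq using assms by simp
  have "v \<bullet> ((\<chi> i j. \<integral>t. q t * F t $ i $ j \<partial>N) *v w) =
     (\<Sum>i\<in>UNIV. \<Sum>j\<in>UNIV. v $ i * w $ j * (\<integral>t. q t * F t $ i $ j \<partial>N))"
    by (simp add: inner_vec_def matrix_vector_mult_def sum_distrib_left ac_simps)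
  also have "\<dots> = (\<Sum>i\<in>UNIV. \<Sum>j\<in>UNIV. \<integral>t. v $ i * w $ j * (q t * F t $ i $ j) \<partial>N)"
    by (simp only: integral_mult_right_zero)
  also have "\<dots> = (\<integral>t. (\<Sum>i\<in>UNIV. \<Sum>j\<in>UNIV. v $ i * w $ j * (q t * F t $ i $ j)) \<partial>N)"
    using assms by (simp add: Bochner_Integration.integral_sum)
  also have "\<dots> = (\<integral>t. q t * (v \<bullet> (F t *v w)) \<partial>N)" unfolding eq ..
  finally show "v \<bullet> ((\<chi> i j. \<integral>t. q t * F t $ i $ j \<partial>N) *v w) = (\<integral>t. q t * (v \<bullet> (F t *v w)) \<partial>N)" .
qed

lemma lin_G:
  fixes f :: "'a \<Rightarrow> real^'l" and \<phi> :: "'a \<Rightarrow> real^'m"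
  assumes q: "q \<in> borel_measurable N" "\<And>t. 0 \<le> q t"
  and f: "\<And>i. L2d N q (\<lambda>t. f t $ i)" and \<phi>: "\<And>j. L2d N q (\<lambda>t. \<phi> t $ j)"
  shows "(\<integral>t. q t * (2 * ((v \<bullet> f t) * (w \<bullet> \<phi> t)) - (w \<bullet> \<phi> t) * (w \<bullet> \<phi> t)) \<partial>N)
      = 2 * (v \<bullet> ((\<chi> i j. \<integral>t. q t * (f t $ i * \<phi> t $ j) \<partial>N) *v w))
        - w \<bullet> ((\<chi> i j. \<integral>t. q t * (\<phi> t $ i * \<phi> t $ j) \<partial>N) *v w)"
    and "integrable N (\<lambda>t. q t * (2 * ((v \<bullet> f t) * (w \<bullet> \<phi> t)) - (w \<bullet> \<phi> t) * (w \<bullet> \<phi> t)))"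
    and "(\<lambda>t. 2 * ((v \<bullet> f t) * (w \<bullet> \<phi> t)) - (w \<bullet> \<phi> t) * (w \<bullet> \<phi> t)) \<in> borel_measurable N"
proof -
  note e2 = gen_forms[OF q f \<phi>, of v w] and e3 = gen_forms[OF q \<phi> \<phi>, of w w]
  have eq: "(\<lambda>t. q t * (2 * ((v \<bullet> f t) * (w \<bullet> \<phi> t)) - (w \<bullet> \<phi> t) * (w \<bullet> \<phi> t)))
     = (\<lambda>t. 2 * (q t * ((v \<bullet> f t) * (w \<bullet> \<phi> t))) - q t * ((w \<bullet> \<phi> t) * (w \<bullet> \<phi> t)))"
    by (rule ext) (simp add: algebra_simps)
  show "integrable N (\<lambda>t. q t * (2 * ((v \<bullet> f t) * (w \<bullet> \<phi> t)) - (w \<bullet> \<phi> t) * (w \<bullet> \<phi> t)))"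
    unfolding eq using e2(2) e3(2) by simp
  show "(\<integral>t. q t * (2 * ((v \<bullet> f t) * (w \<bullet> \<phi> t)) - (w \<bullet> \<phi> t) * (w \<bullet> \<phi> t)) \<partial>N)
      = 2 * (v \<bullet> ((\<chi> i j. \<integral>t. q t * (f t $ i * \<phi> t $ j) \<partial>N) *v w))
        - w \<bullet> ((\<chi> i j. \<integral>t. q t * (\<phi> t $ i * \<phi> t $ j) \<partial>N) *v w)"
    unfolding eq e2(1) e3(1) using e2(2) e3(2) by simp
  show "(\<lambda>t. 2 * ((v \<bullet> f t) * (w \<bullet> \<phi> t)) - (w \<bullet> \<phi> t) * (w \<bullet> \<phi> t)) \<in> borel_measurable N"
    using e2(3) e3(3) by simp
qed



lemma Rmat_post_eq:
  "Rmat_post p x u v = (\<chi> i j. \<integral>t. p (x, t) / marg p x * (u (x, t) $ i * v (x, t) $ j) \<partial>lborel)"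
  by (simp add: Rmat_post_def post_exp_def)

lemma Rmat_eq:
  "Rmat p u v = (\<chi> i j. \<integral>t. p t * (u t $ i * v t $ j) \<partial>lborel)"
  by (simp add: Rmat_def joint_exp_def)

lemma mat_marg_exp_eq:
  "mat_marg_exp p A = (\<chi> i j. \<integral>x. marg p x * A x $ i $ j \<partial>lborel)"
  by (simp add: mat_marg_exp_def marg_exp_def)

lemma psd_of:
  fixes A B :: "real^'a^'a"
  assumes "\<And>v. v \<bullet> (B *v v) \<le> v \<bullet> (A *v v)"
  shows "A \<succeq>\<^sub>L B"
  unfolding loewner_ge_def psd_def
  using assms by (simp add: matrix_vector_mult_diff_rdistrib inner_diff_right)

theorem theorem2:
  fixes p :: "(real^'n) \<times> (real^'k) \<Rightarrow> real"
    and X :: "(real^'n) set" and \<Theta> :: "(real^'k) set"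
    and g :: "(real^'n) \<times> (real^'k) \<Rightarrow> real^'l"
    and \<phi> :: "(real^'n) \<times> (real^'k) \<Rightarrow> real^'m"
    and \<zeta> :: "(real^'n) \<times> (real^'k) \<Rightarrow> real^'l"
  assumes p_meas: "p \<in> borel_measurable lborel"
    and p_nonneg: "\<And>z. 0 \<le> p z"
    and p_supp: "\<And>z. z \<notin> X \<times> \<Theta> \<Longrightarrow> p z = 0"
    and p_int: "integrable lborel p"
    and p_one: "(\<integral>z. p z \<partial>lborel) = 1"
    and g_W2: "\<And>l. W2 p (\<lambda>z. g z $ l)"
    and phi_W2: "\<And>m. W2 p (\<lambda>z. \<phi> z $ m)"
    and phi_indep: "lin_indep_L2 p \<phi>"
    and zeta_W2: "\<And>l. W2 p (\<lambda>z. \<zeta> z $ l)"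
    and zeta_orth: "\<And>l. AE x in lborel. x \<in> support p \<longrightarrow>
        (\<forall>m. post_exp p x (\<lambda>\<theta>. \<zeta> (x, \<theta>) $ l * \<phi> (x, \<theta>) $ m) = 0)"
    and Q_inv: "AE x in lborel. x \<in> support p \<longrightarrow> invertible (Rmat_post p x \<phi> \<phi>)"
  shows "Rmat p (\<lambda>z. g z - \<zeta> z) (\<lambda>z. g z - \<zeta> z) \<succeq>\<^sub>L
           mat_marg_exp p (\<lambda>x. Rmat_post p x g \<phi> ** matrix_inv (Rmat_post p x \<phi> \<phi>)
                                 ** transpose (Rmat_post p x g \<phi>))
       \<and> mat_marg_exp p (\<lambda>x. Rmat_post p x g \<phi> ** matrix_inv (Rmat_post p x \<phi> \<phi>)
                                 ** transpose (Rmat_post p x g \<phi>))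
         \<succeq>\<^sub>L Rmat p g \<phi> ** matrix_inv (Rmat p \<phi> \<phi>) ** transpose (Rmat p g \<phi>)"
proof -
  interpret P: pdens p by (rule pdens.intro[OF p_meas p_nonneg p_int])
  define Mx where "Mx x = Rmat_post p x g \<phi> ** matrix_inv (Rmat_post p x \<phi> \<phi>) ** transpose (Rmat_post p x g \<phi>)" for x
  define B where "B = mat_marg_exp p Mx"
  have Mx_eta: "(\<lambda>x. Rmat_post p x g \<phi> ** matrix_inv (Rmat_post p x \<phi> \<phi>) ** transpose (Rmat_post p x g \<phi>)) = Mx"
    unfolding Mx_def ..
  have gL: "\<And>i. L2d lborel p (\<lambda>z. g z $ i)" by (rule P.joint_L2d[OF g_W2])
  have zL: "\<And>i. L2d lborel p (\<lambda>z. \<zeta> z $ i)" by (rule P.joint_L2d[OF zeta_W2])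
  have phL: "\<And>i. L2d lborel p (\<lambda>z. \<phi> z $ i)" by (rule P.joint_L2d[OF phi_W2])
  have gzL: "\<And>i. L2d lborel p (\<lambda>z. (g z - \<zeta> z) $ i)"
    using L2d_diff[OF p_meas p_nonneg gL zL] by simp
  note qm = P.q_meas and qn = P.q_nonneg

  define good where "good x \<longleftrightarrow> x \<in> support p \<longrightarrow>
      (\<forall>i. L2d lborel (\<lambda>\<theta>. p (x, \<theta>) / marg p x) (\<lambda>\<theta>. g (x, \<theta>) $ i))
    \<and> (\<forall>i. L2d lborel (\<lambda>\<theta>. p (x, \<theta>) / marg p x) (\<lambda>\<theta>. \<zeta> (x, \<theta>) $ i))
    \<and> (\<forall>i. L2d lborel (\<lambda>\<theta>. p (x, \<theta>) / marg p x) (\<lambda>\<theta>. \<phi> (x, \<theta>) $ i))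
    \<and> (\<forall>i j. post_exp p x (\<lambda>\<theta>. \<zeta> (x, \<theta>) $ i * \<phi> (x, \<theta>) $ j) = 0)
    \<and> invertible (Rmat_post p x \<phi> \<phi>)" for x
  have AEg: "AE x in lborel. \<forall>i. x \<in> support p \<longrightarrow> L2d lborel (\<lambda>\<theta>. p (x, \<theta>) / marg p x) (\<lambda>\<theta>. g (x, \<theta>) $ i)"
    unfolding AE_all_countable using P.post_L2d[OF g_W2] by simp
  have AEz: "AE x in lborel. \<forall>i. x \<in> support p \<longrightarrow> L2d lborel (\<lambda>\<theta>. p (x, \<theta>) / marg p x) (\<lambda>\<theta>. \<zeta> (x, \<theta>) $ i)"
    unfolding AE_all_countable using P.post_L2d[OF zeta_W2] by simp
  have AEph: "AE x in lborel. \<forall>i. x \<in> support p \<longrightarrow> L2d lborel (\<lambda>\<theta>. p (x, \<theta>) / marg p x) (\<lambda>\<theta>. \<phi> (x, \<theta>) $ i)"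
    unfolding AE_all_countable using P.post_L2d[OF phi_W2] by simp
  have AEo: "AE x in lborel. \<forall>i. x \<in> support p \<longrightarrow> (\<forall>j. post_exp p x (\<lambda>\<theta>. \<zeta> (x, \<theta>) $ i * \<phi> (x, \<theta>) $ j) = 0)"
    unfolding AE_all_countable using zeta_orth by simp
  have AEgood: "AE x in lborel. good x"
    using AEg AEz AEph AEo Q_inv unfolding good_def by eventually_elim blast

  have not_supp: "marg p x = 0" if "x \<notin> support p" for x
    using that P.marg_nonneg[of x] unfolding support_def by simp

  have loc: "v \<bullet> (Mx x *v v) \<le> v \<bullet> (Rmat_post p x (\<lambda>z. g z - \<zeta> z) (\<lambda>z. g z - \<zeta> z) *v v)
    \<and> v \<bullet> (Mx x *v v) \<le> v \<bullet> (Rmat_post p x g g *v v)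
    \<and> 2 * (v \<bullet> (Rmat_post p x g \<phi> *v w)) - w \<bullet> (Rmat_post p x \<phi> \<phi> *v w) \<le> v \<bullet> (Mx x *v v)
    \<and> a \<bullet> (Mx x *v b) = b \<bullet> (Mx x *v a)"
    if gx: "good x" and sx: "x \<in> support p" for x v w a b
  proof -
    from gx sx have Lg: "\<And>i. L2d lborel (\<lambda>\<theta>. p (x, \<theta>) / marg p x) (\<lambda>\<theta>. g (x, \<theta>) $ i)"
      and Lz: "\<And>i. L2d lborel (\<lambda>\<theta>. p (x, \<theta>) / marg p x) (\<lambda>\<theta>. \<zeta> (x, \<theta>) $ i)"
      and Lp: "\<And>i. L2d lborel (\<lambda>\<theta>. p (x, \<theta>) / marg p x) (\<lambda>\<theta>. \<phi> (x, \<theta>) $ i)"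
      and orth: "\<And>i j. post_exp p x (\<lambda>\<theta>. \<zeta> (x, \<theta>) $ i * \<phi> (x, \<theta>) $ j) = 0"
      and inv: "invertible (Rmat_post p x \<phi> \<phi>)"
      unfolding good_def by auto
    have orth': "\<And>i j. (\<integral>t. p (x, t) / marg p x * (\<zeta> (x, t) $ i * \<phi> (x, t) $ j) \<partial>lborel) = 0"
      using orth unfolding post_exp_def .
    have inv': "invertible (\<chi> i j. \<integral>t. p (x, t) / marg p x * (\<phi> (x, t) $ i * \<phi> (x, t) $ j) \<partial>lborel)"
      using inv unfolding Rmat_post_eq .
    note lp = local_pack[where q="\<lambda>\<theta>. p (x, \<theta>) / marg p x" and N=lborel and f="\<lambda>\<theta>. g (x, \<theta>)"
        and z="\<lambda>\<theta>. \<zeta> (x, \<theta>)" and \<phi>="\<lambda>\<theta>. \<phi> (x, \<theta>)"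
        and R="Rmat_post p x g \<phi>" and Q="Rmat_post p x \<phi> \<phi>" and S="Rmat_post p x g g"
        and Sz="Rmat_post p x (\<lambda>z. g z - \<zeta> z) (\<lambda>z. g z - \<zeta> z)" and M="Mx x",
        OF qm qn Lg Lz Lp orth' inv' Rmat_post_eq Rmat_post_eq Rmat_post_eq Rmat_post_eq Mx_def]
    show ?thesis using lp(1)[of v] lp(2)[of v] lp(3)[of v w] lp(4)[of a b] by simp
  qed

  have Rpm: "(\<lambda>x. Rmat_post p x u v $ i $ j) \<in> borel_measurable lborel"
    if "(\<lambda>z. u z $ i * v z $ j) \<in> borel_measurable lborel" for u :: "_ \<Rightarrow> real^'c" and v :: "_ \<Rightarrow> real^'d" and i j
    using P.postm[OF that] by (simp add: Rmat_post_def)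
  have gm: "\<And>i. (\<lambda>z. g z $ i) \<in> borel_measurable lborel" using gL unfolding L2d_def by blast
  have phm: "\<And>i. (\<lambda>z. \<phi> z $ i) \<in> borel_measurable lborel" using phL unfolding L2d_def by blast
  have Rxm: "\<And>i j. (\<lambda>x. Rmat_post p x g \<phi> $ i $ j) \<in> borel_measurable lborel"
    by (rule Rpm) (rule borel_measurable_times[OF gm phm])
  have Qxm: "\<And>i j. (\<lambda>x. Rmat_post p x \<phi> \<phi> $ i $ j) \<in> borel_measurable lborel"
    by (rule Rpm) (rule borel_measurable_times[OF phm phm])
  have Mxm: "\<And>i j. (\<lambda>x. Mx x $ i $ j) \<in> borel_measurable lborel"
    unfolding Mx_def
    by (intro matmul_entry_measurable transpose_entry_measurable matrix_inv_measurable Rxm Qxm)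

  have Sint: "integrable lborel (\<lambda>x. marg p x * Rmat_post p x g g $ i $ i)" for i
  proof -
    have "integrable lborel (\<lambda>x. marg p x * post_exp p x (\<lambda>\<theta>. g (x, \<theta>) $ i * g (x, \<theta>) $ i))"
      using P.fubini_post(1)[OF borel_measurable_times[OF gm gm] L2d_prod[OF p_meas p_nonneg gL gL]]
      by simp
    then show ?thesis by (simp add: Rmat_post_def)
  qed
  have Fint: "integrable lborel (\<lambda>x. marg p x * Mx x $ i $ j)" for i j
  proof (rule Bochner_Integration.integrable_bound)
    show "integrable lborel (\<lambda>x. (marg p x * Rmat_post p x g g $ i $ i + marg p x * Rmat_post p x g g $ j $ j) / 2)"
      using Sint[of i] Sint[of j] by simp
    show "(\<lambda>x. marg p x * Mx x $ i $ j) \<in> borel_measurable lborel"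
      by (rule borel_measurable_times[OF P.marg_meas Mxm])
    show "AE x in lborel. norm (marg p x * Mx x $ i $ j)
       \<le> norm ((marg p x * Rmat_post p x g g $ i $ i + marg p x * Rmat_post p x g g $ j $ j) / 2)"
      using AEgood
    proof eventually_elim
      fix x assume gx: "good x"
      show "norm (marg p x * Mx x $ i $ j)
       \<le> norm ((marg p x * Rmat_post p x g g $ i $ i + marg p x * Rmat_post p x g g $ j $ j) / 2)"
      proof (cases "x \<in> support p")
        case False then show ?thesis using not_supp by simp
      next
        case True
        have bnd: "\<bar>Mx x $ i $ j\<bar> \<le> (Rmat_post p x g g $ i $ i + Rmat_post p x g g $ j $ j) / 2"
        proof (rule psd_entry_bound)
          show "0 \<le> c \<bullet> (Mx x *v c)" for c using loc[OF gx True, of c 0] by simp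
          show "a \<bullet> (Mx x *v b) = b \<bullet> (Mx x *v a)" for a b using loc[OF gx True, of _ _ a b] by blast
          show "c \<bullet> (Mx x *v c) \<le> c \<bullet> (Rmat_post p x g g *v c)" for c using loc[OF gx True, of c] by blast
        qed
        have m0: "0 \<le> marg p x" by (rule P.marg_nonneg)
        have "norm (marg p x * Mx x $ i $ j) = marg p x * \<bar>Mx x $ i $ j\<bar>" using m0 by (simp add: abs_mult)
        also have "\<dots> \<le> marg p x * ((Rmat_post p x g g $ i $ i + Rmat_post p x g g $ j $ j) / 2)"
          using bnd m0 by (rule mult_left_mono)
        also have "\<dots> = (marg p x * Rmat_post p x g g $ i $ i + marg p x * Rmat_post p x g g $ j $ j) / 2"
          by (simp add: algebra_simps)
        also have "\<dots> \<le> norm ((marg p x * Rmat_post p x g g $ i $ i + marg p x * Rmat_post p x g g $ j $ j) / 2)"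
          unfolding real_norm_def by (rule abs_ge_self)
        finally show ?thesis .
      qed
    qed
  qed
  have Bform: "v \<bullet> (B *v w) = (\<integral>x. marg p x * (v \<bullet> (Mx x *v w)) \<partial>lborel)"
    and Bint: "integrable lborel (\<lambda>x. marg p x * (v \<bullet> (Mx x *v w)))" for v w
    using bilin2[of lborel "marg p" Mx v w, OF Fint] unfolding B_def mat_marg_exp_eq by auto

  have ineq1: "Rmat p (\<lambda>z. g z - \<zeta> z) (\<lambda>z. g z - \<zeta> z) \<succeq>\<^sub>L B"
  proof (rule psd_of)
    fix v :: "real^'l"
    define H where "H z = (v \<bullet> (g z - \<zeta> z)) * (v \<bullet> (g z - \<zeta> z))" for z
    note gf = gen_forms[OF p_meas p_nonneg gzL gzL, of v v]
    have Hm: "H \<in> borel_measurable lborel" using gf(3) unfolding H_def by simp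
    have Hi: "integrable lborel (\<lambda>z. p z * H z)" using gf(2) unfolding H_def by simp
    have "v \<bullet> (Rmat p (\<lambda>z. g z - \<zeta> z) (\<lambda>z. g z - \<zeta> z) *v v) = joint_exp p H"
      using gf(1) unfolding Rmat_eq H_def joint_exp_def by simp
    also have "\<dots> = (\<integral>x. marg p x * post_exp p x (\<lambda>\<theta>. H (x, \<theta>)) \<partial>lborel)"
      using P.fubini_post(2)[OF Hm Hi] unfolding marg_exp_def .
    finally have lhs: "v \<bullet> (Rmat p (\<lambda>z. g z - \<zeta> z) (\<lambda>z. g z - \<zeta> z) *v v)
       = (\<integral>x. marg p x * post_exp p x (\<lambda>\<theta>. H (x, \<theta>)) \<partial>lborel)" .
    have "(\<integral>x. marg p x * (v \<bullet> (Mx x *v v)) \<partial>lborel) \<le> (\<integral>x. marg p x * post_exp p x (\<lambda>\<theta>. H (x, \<theta>)) \<partial>lborel)"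
    proof (rule integral_mono_AE[OF Bint P.fubini_post(1)[OF Hm Hi]])
      show "AE x in lborel. marg p x * (v \<bullet> (Mx x *v v)) \<le> marg p x * post_exp p x (\<lambda>\<theta>. H (x, \<theta>))"
        using AEgood
      proof eventually_elim
        fix x assume gx: "good x"
        show "marg p x * (v \<bullet> (Mx x *v v)) \<le> marg p x * post_exp p x (\<lambda>\<theta>. H (x, \<theta>))"
        proof (cases "x \<in> support p")
          case False then show ?thesis using not_supp by simp
        next
          case True
          from gx True have Lg: "\<And>i. L2d lborel (\<lambda>\<theta>. p (x, \<theta>) / marg p x) (\<lambda>\<theta>. g (x, \<theta>) $ i)"
            and Lz: "\<And>i. L2d lborel (\<lambda>\<theta>. p (x, \<theta>) / marg p x) (\<lambda>\<theta>. \<zeta> (x, \<theta>) $ i)"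
            unfolding good_def by auto
          have Lgz: "\<And>i. L2d lborel (\<lambda>\<theta>. p (x, \<theta>) / marg p x) (\<lambda>\<theta>. (g (x, \<theta>) - \<zeta> (x, \<theta>)) $ i)"
            using L2d_diff[OF qm qn Lg Lz] by simp
          note lf = gen_forms[OF qm qn Lgz Lgz, of v v]
          have "post_exp p x (\<lambda>\<theta>. H (x, \<theta>)) = v \<bullet> (Rmat_post p x (\<lambda>z. g z - \<zeta> z) (\<lambda>z. g z - \<zeta> z) *v v)"
            using lf(1) unfolding Rmat_post_eq H_def post_exp_def by simp
          then have "v \<bullet> (Mx x *v v) \<le> post_exp p x (\<lambda>\<theta>. H (x, \<theta>))"
            using loc[OF gx True, of v] by simp
          then show ?thesis using P.marg_nonneg by (rule mult_left_mono)
        qed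
      qed
    qed
    then show "v \<bullet> (B *v v) \<le> v \<bullet> (Rmat p (\<lambda>z. g z - \<zeta> z) (\<lambda>z. g z - \<zeta> z) *v v)"
      unfolding lhs Bform .
  qed

  define Qg where "Qg = Rmat p \<phi> \<phi>"
  define Rg where "Rg = Rmat p g \<phi>"
  have Qs: "transpose Qg = Qg"
    unfolding Qg_def Rmat_eq by (simp add: transpose_def vec_eq_iff mult.commute)
  have Qpsd: "0 \<le> c \<bullet> (Qg *v c)" for c
    using quad_gen[OF p_meas p_nonneg gL phL, of 0 c] unfolding Qg_def Rmat_eq by simp
  have Qinv: "invertible Qg"
  proof -
    have ker: "c = 0" if "Qg *v c = 0" for c
    proof -
      note gf = gen_forms[OF p_meas p_nonneg phL phL, of c c]
      have "(\<integral>z. p z * ((c \<bullet> \<phi> z) * (c \<bullet> \<phi> z)) \<partial>lborel) = 0"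
        using gf(1) that unfolding Qg_def Rmat_eq by simp
      then have "AE z in lborel. p z * ((c \<bullet> \<phi> z) * (c \<bullet> \<phi> z)) = 0"
        using integral_nonneg_eq_0_iff_AE[OF gf(2)] p_nonneg by simp
      then have "AE z in lborel. p z \<noteq> 0 \<longrightarrow> c \<bullet> \<phi> z = 0" by eventually_elim auto
      then show "c = 0" using phi_indep unfolding lin_indep_L2_def by blast
    qed
    then obtain B' where "B' ** Qg = mat 1" using matrix_left_invertible_ker[of Qg] by blast
    then have "Qg ** B' = mat 1" using matrix_left_right_inverse by blast
    with \<open>B' ** Qg = mat 1\<close> show ?thesis unfolding invertible_def by blast
  qed

  have ineq2: "B \<succeq>\<^sub>L Rg ** matrix_inv Qg ** transpose Rg"
  proof (rule psd_of)
    fix v :: "real^'l"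
    show "v \<bullet> ((Rg ** matrix_inv Qg ** transpose Rg) *v v) \<le> v \<bullet> (B *v v)"
    proof (rule schur_alg(2)[OF Qs Qpsd Qinv, where R=Rg], intro allI)
      fix w :: "real^'m"
      define G where "G z = 2 * ((v \<bullet> g z) * (w \<bullet> \<phi> z)) - (w \<bullet> \<phi> z) * (w \<bullet> \<phi> z)" for z
      note lg = lin_G[OF p_meas p_nonneg gL phL, of v w]
      have Gm: "G \<in> borel_measurable lborel" using lg(3) unfolding G_def by simp
      have Gi: "integrable lborel (\<lambda>z. p z * G z)" using lg(2) unfolding G_def by simp
      have "2 * (v \<bullet> (Rg *v w)) - w \<bullet> (Qg *v w) = joint_exp p G"
        using lg(1) unfolding Rg_def Qg_def Rmat_eq G_def joint_exp_def by simp
      also have "\<dots> = (\<integral>x. marg p x * post_exp p x (\<lambda>\<theta>. G (x, \<theta>)) \<partial>lborel)"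
        using P.fubini_post(2)[OF Gm Gi] unfolding marg_exp_def .
      also have "\<dots> \<le> (\<integral>x. marg p x * (v \<bullet> (Mx x *v v)) \<partial>lborel)"
      proof (rule integral_mono_AE[OF P.fubini_post(1)[OF Gm Gi] Bint])
        show "AE x in lborel. marg p x * post_exp p x (\<lambda>\<theta>. G (x, \<theta>)) \<le> marg p x * (v \<bullet> (Mx x *v v))"
          using AEgood
        proof eventually_elim
          fix x assume gx: "good x"
          show "marg p x * post_exp p x (\<lambda>\<theta>. G (x, \<theta>)) \<le> marg p x * (v \<bullet> (Mx x *v v))"
          proof (cases "x \<in> support p")
            case False then show ?thesis using not_supp by simp
          next
            case True
            from gx True have Lg: "\<And>i. L2d lborel (\<lambda>\<theta>. p (x, \<theta>) / marg p x) (\<lambda>\<theta>. g (x, \<theta>) $ i)"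
              and Lp: "\<And>i. L2d lborel (\<lambda>\<theta>. p (x, \<theta>) / marg p x) (\<lambda>\<theta>. \<phi> (x, \<theta>) $ i)"
              unfolding good_def by auto
            note ll = lin_G[OF qm qn Lg Lp, of v w]
            have "post_exp p x (\<lambda>\<theta>. G (x, \<theta>)) = 2 * (v \<bullet> (Rmat_post p x g \<phi> *v w)) - w \<bullet> (Rmat_post p x \<phi> \<phi> *v w)"
              using ll(1) unfolding Rmat_post_eq G_def post_exp_def by simp
            then have "post_exp p x (\<lambda>\<theta>. G (x, \<theta>)) \<le> v \<bullet> (Mx x *v v)"
              using loc[OF gx True, of v w] by simp
            then show ?thesis using P.marg_nonneg by (rule mult_left_mono)
          qed
        qed
      qed
      also have "\<dots> = v \<bullet> (B *v v)" by (rule Bform[symmetric])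
      finally show "0 \<le> v \<bullet> (B *v v) - 2 * (v \<bullet> (Rg *v w)) + w \<bullet> (Qg *v w)" by simp
    qed
  qed
  show ?thesis
    using ineq1 ineq2 unfolding B_def Mx_eta Qg_def Rg_def by simp
qed

end
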